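(* Let $k\ge3$, $n\ge2$, $N\in\mathbb{Z}$, and let $P$ be an $N$-representative of a $k$-spiral $[P]\in\mathcal{P}_n$. If $P$ is of type $\alpha$, then $(P_i,P_{i+k},P_{i+2k})$ is positive for all $i>N$. If $P$ is of type $\beta$, then $(P_{i+2k},P_{i+k},P_i)$ is positive for all $i>N$.
   Context: The affine patch $\mathbb{A}^2=\{[x:y:1]\}\subset\mathbb{RP}^2$ is identified with $\mathbb{R}^2$. For $V_1,V_2,V_3\in\mathbb{A}^2$ with affine coordinates $\tilde V_j=(x_j,y_j,1)$, $\mathcal{O}(V_1,V_2,V_3)=\det(\tilde V_1,\tilde V_2,\tilde V_3)$; the triple is positive if $\mathcal{O}>0$. $\operatorname{int}(V_1,V_2,V_3)$ is the interior of the affine triangle. A twisted $n$-gon is a map $P:\mathbb{Z}\to\mathbb{RP}^2$ with every three consecutive points non-collinear and $P_{i+n}=M(P_i)$ for a fixed $M\in\mathrm{PGL}_3(\mathbb{R})$; $\mathcal{P}_n$ is the set of classes modulo projective equivalence. $P$ is $k$-nice if $P_i,P_{i+1},P_{i+k},P_{i+k+1}$ are in general position for every $i$. For $k\ge3$, $[P]\in\mathcal{P}_n$ is a $k$-spiral of type $\alpha$ (resp. $\beta$) if it is $k$-nice and for every $N\in\mathbb{Z}$ some representative $P$ satisfies, for all $i\ge N$: $P_i\in\mathbb{A}^2$, $(P_i,P_{i+1},P_{i+2})$ positive, and (type $\alpha$) $(P_i,P_{i+1},P_{i+k+1})$ positive with $P_{i+k}\in\operatorname{int}(P_i,P_{i+1},P_{i+k+1})$,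 resp. (type $\beta$) $(P_i,P_{i+1},P_{i+k})$ positive with $P_{i+k+1}\in\operatorname{int}(P_i,P_{i+1},P_{i+k})$. Such a representative is called an $N$-representative of type $\alpha$ (resp. $\beta$). *)

theory Defs
  imports "HOL-Analysis.Analysis"
begin

text \<open>Points of RP^2 are represented by nonzero homogeneous coordinate vectors in real^3;
  two vectors represent the same point iff they are nonzero multiples of each other.\<close>

definition same_pt :: "real^3 \<Rightarrow> real^3 \<Rightarrow> bool" where
  "same_pt u v \<longleftrightarrow> (\<exists>c. c \<noteq> 0 \<and> v = c *\<^sub>R u)"

definition det3 :: "real^3 \<Rightarrow> real^3 \<Rightarrow> real^3 \<Rightarrow> real" where
  "det3 u v w = det (\<chi> r::3. if r = 1 then u else if r = 2 then v else w)"

definition noncollinear :: "real^3 \<Rightarrow> real^3 \<Rightarrow> real^3 \<Rightarrow> bool" where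
  "noncollinear u v w \<longleftrightarrow> det3 u v w \<noteq> 0"

definition twisted_ngon :: "nat \<Rightarrow> (int \<Rightarrow> real^3) \<Rightarrow> bool" where
  "twisted_ngon n P \<longleftrightarrow>
     (\<forall>i. P i \<noteq> 0) \<and>
     (\<forall>i. noncollinear (P i) (P (i+1)) (P (i+2))) \<and>
     (\<exists>M::real^3^3. invertible M \<and> (\<forall>i. same_pt (M *v P i) (P (i + int n))))"

definition proj_equiv :: "(int \<Rightarrow> real^3) \<Rightarrow> (int \<Rightarrow> real^3) \<Rightarrow> bool" where
  "proj_equiv P Q \<longleftrightarrow> (\<exists>A::real^3^3. invertible A \<and> (\<forall>i. same_pt (A *v P i) (Q i)))"

definition gen_pos4 :: "real^3 \<Rightarrow> real^3 \<Rightarrow> real^3 \<Rightarrow> real^3 \<Rightarrow> bool" where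
  "gen_pos4 a b c d \<longleftrightarrow> noncollinear a b c \<and> noncollinear a b d \<and>
      noncollinear a c d \<and> noncollinear b c d"

definition k_nice :: "nat \<Rightarrow> (int \<Rightarrow> real^3) \<Rightarrow> bool" where
  "k_nice k P \<longleftrightarrow> (\<forall>i. gen_pos4 (P i) (P (i+1)) (P (i + int k)) (P (i + int k + 1)))"

definition in_affine :: "real^3 \<Rightarrow> bool" where
  "in_affine u \<longleftrightarrow> u $ 3 \<noteq> 0"

definition aff3 :: "real^3 \<Rightarrow> real^3" where
  "aff3 u = (1 / u $ 3) *\<^sub>R u"

definition aff2 :: "real^3 \<Rightarrow> real^2" where
  "aff2 u = (\<chi> j::2. if j = 1 then u $ 1 / u $ 3 else u $ 2 / u $ 3)"

definition orient :: "real^3 \<Rightarrow> real^3 \<Rightarrow> real^3 \<Rightarrow> real" where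
  "orient u v w = det3 (aff3 u) (aff3 v) (aff3 w)"

definition positive3 :: "real^3 \<Rightarrow> real^3 \<Rightarrow> real^3 \<Rightarrow> bool" where
  "positive3 u v w \<longleftrightarrow> orient u v w > 0"

definition in_tri_int :: "real^3 \<Rightarrow> real^3 \<Rightarrow> real^3 \<Rightarrow> real^3 \<Rightarrow> bool" where
  "in_tri_int p u v w \<longleftrightarrow> aff2 p \<in> interior (convex hull {aff2 u, aff2 v, aff2 w})"

definition N_rep_alpha :: "nat \<Rightarrow> int \<Rightarrow> (int \<Rightarrow> real^3) \<Rightarrow> bool" where
  "N_rep_alpha k N P \<longleftrightarrow> (\<forall>i\<ge>N.
     in_affine (P i) \<and> positive3 (P i) (P (i+1)) (P (i+2)) \<and>
     positive3 (P i) (P (i+1)) (P (i + int k + 1)) \<and>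
     in_tri_int (P (i + int k)) (P i) (P (i+1)) (P (i + int k + 1)))"

definition N_rep_beta :: "nat \<Rightarrow> int \<Rightarrow> (int \<Rightarrow> real^3) \<Rightarrow> bool" where
  "N_rep_beta k N P \<longleftrightarrow> (\<forall>i\<ge>N.
     in_affine (P i) \<and> positive3 (P i) (P (i+1)) (P (i+2)) \<and>
     positive3 (P i) (P (i+1)) (P (i + int k)) \<and>
     in_tri_int (P (i + int k + 1)) (P i) (P (i+1)) (P (i + int k)))"

text \<open>[P] is a k-spiral of type alpha / beta (P a twisted n-gon; k >= 3 is assumed separately).\<close>
definition spiral_alpha :: "nat \<Rightarrow> nat \<Rightarrow> (int \<Rightarrow> real^3) \<Rightarrow> bool" where
  "spiral_alpha n k P \<longleftrightarrow> twisted_ngon n P \<and> k_nice k P \<and>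
     (\<forall>N. \<exists>Q. proj_equiv P Q \<and> N_rep_alpha k N Q)"

definition spiral_beta :: "nat \<Rightarrow> nat \<Rightarrow> (int \<Rightarrow> real^3) \<Rightarrow> bool" where
  "spiral_beta n k P \<longleftrightarrow> twisted_ngon n P \<and> k_nice k P \<and>
     (\<forall>N. \<exists>Q. proj_equiv P Q \<and> N_rep_beta k N Q)"

end

theory Submission
  imports Defs
begin

definition cr :: "real^2 \<Rightarrow> real^2 \<Rightarrow> real^2 \<Rightarrow> real" where
  "cr a b c = (b$1-a$1)*(c$2-a$2) - (b$2-a$2)*(c$1-a$1)"

lemma orient_eq:
  assumes "in_affine u" "in_affine v" "in_affine w"
  shows "orient u v w = cr (aff2 u) (aff2 v) (aff2 w)"
  using assms
  by (simp add: orient_def det3_def det_3 aff3_def aff2_def cr_def in_affine_def field_simps)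

lemma hull_nonneg:
  assumes "x \<in> convex hull {a,b,c}"
  shows "cr a b x \<ge> 0 \<or> cr a b c < 0"
proof -
  obtain u v w where x: "x = u *\<^sub>R a + v *\<^sub>R b + w *\<^sub>R c" and "0 \<le> u" "0 \<le> v" "0 \<le> w" "u+v+w=1"
    using assms unfolding convex_hull_3 by blast
  have "cr a b x = w * cr a b c"
  proof -
    have u: "u = 1 - v - w" using \<open>u+v+w=1\<close> by simp
    show ?thesis unfolding x cr_def u by (simp add: algebra_simps)
  qed
  then show ?thesis using \<open>0 \<le> w\<close>
    by (smt (verit) mult_nonneg_nonneg mult_nonneg_nonpos)
qed

lemma int_pos:
  assumes c: "cr a b c > 0" and x: "x \<in> interior (convex hull {a,b,c})"
  shows "cr a b x > 0"
proof (rule ccontr)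
  assume "\<not> cr a b x > 0"
  moreover have "cr a b x \<ge> 0" using hull_nonneg[of x a b c] x interior_subset c by force
  ultimately have x0: "cr a b x = 0" by simp
  obtain e where e: "e > 0" "ball x e \<subseteq> convex hull {a,b,c}" using x mem_interior by blast
  define n :: "real^2" where "n = (\<chi> j. if j = 1 then -(b$2-a$2) else b$1-a$1)"
  have n1: "n$1 = -(b$2-a$2)" and n2: "n$2 = b$1-a$1" by (simp_all add: n_def)
  have "n \<noteq> 0"
  proof
    assume "n = 0"
    then have "b$1 = a$1" "b$2 = a$2" using n1 n2 by auto
    then show False using c by (simp add: cr_def)
  qed
  then have nn: "norm n > 0" by simp
  define t where "t = e / (2 * norm n)"
  have t: "t > 0" using e nn by (simp add: t_def)
  define y where "y = x - t *\<^sub>R n"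
  have "dist x y = e/2" using nn t e by (simp add: y_def t_def dist_norm)
  then have "y \<in> convex hull {a,b,c}" using e by auto
  then have "cr a b y \<ge> 0" using hull_nonneg c by force
  moreover have "cr a b y = cr a b x - t * ((n$1)^2 + (n$2)^2)"
  proof -
    have b1: "b$1 = a$1 + n$2" and b2: "b$2 = a$2 - n$1" using n1 n2 by simp_all
    show ?thesis unfolding y_def cr_def b1 b2 by (simp add: algebra_simps power2_eq_square)
  qed
  moreover have "(n$1)^2 + (n$2)^2 > 0"
  proof -
    have "n$1 \<noteq> 0 \<or> n$2 \<noteq> 0"
    proof (rule ccontr)
      assume "\<not> ?thesis"
      then have "n = 0" by (simp add: vec_eq_iff forall_2)
      with \<open>n \<noteq> 0\<close> show False by simp
    qed
    then show ?thesis by (auto simp: add_pos_nonneg add_nonneg_pos)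
  qed
  ultimately show False using x0 t by (smt (verit) mult_pos_pos)
qed

lemma cr_cyc: "cr a b c = cr b c a" by (simp add: cr_def algebra_simps)
lemma cr_swap: "cr a b c = - cr a c b" by (simp add: cr_def algebra_simps)

lemma int_pos3:
  assumes c: "cr a b c > 0" and x: "x \<in> interior (convex hull {a,b,c})"
  shows "cr a b x > 0" "cr b c x > 0" "cr c a x > 0"
proof -
  show "cr a b x > 0" using int_pos[OF c x] .
  have "{a,b,c} = {b,c,a}" by auto
  then show "cr b c x > 0" using int_pos[of b c a x] c x cr_cyc[of a b c] by simp
  have "{a,b,c} = {c,a,b}" by auto
  then show "cr c a x > 0" using int_pos[of c a b x] c x cr_cyc[of a b c] cr_cyc[of b c a] by simp
qed

lemma pluecker:
  "cr v d w * cr v p m = cr v d m * cr v p w + cr v p d * cr v m w"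
  by (simp add: cr_def algebra_simps)

lemma alpha_facts:
  assumes R: "N_rep_alpha k N P" and j: "j \<ge> N"
  shows "cr (aff2 (P j)) (aff2 (P (j+1))) (aff2 (P (j+2))) > 0"
    "cr (aff2 (P j)) (aff2 (P (j+1))) (aff2 (P (j+int k+1))) > 0"
    "cr (aff2 (P j)) (aff2 (P (j+1))) (aff2 (P (j+int k))) > 0"
    "cr (aff2 (P (j+1))) (aff2 (P (j+int k+1))) (aff2 (P (j+int k))) > 0"
    "cr (aff2 (P (j+int k+1))) (aff2 (P j)) (aff2 (P (j+int k))) > 0"
proof -
  have aff: "\<And>m. m \<ge> N \<Longrightarrow> in_affine (P m)" using R by (simp add: N_rep_alpha_def)
  have a0: "in_affine (P j)" "in_affine (P (j+1))" "in_affine (P (j+2))"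
     "in_affine (P (j+int k))" "in_affine (P (j+int k+1))" using aff j by auto
  have h: "positive3 (P j) (P (j+1)) (P (j+2))" "positive3 (P j) (P (j+1)) (P (j + int k + 1))"
    "in_tri_int (P (j + int k)) (P j) (P (j+1)) (P (j + int k + 1))"
    using R j by (simp_all add: N_rep_alpha_def)
  show c1: "cr (aff2 (P j)) (aff2 (P (j+1))) (aff2 (P (j+2))) > 0"
    using h(1) a0 by (simp add: positive3_def orient_eq)
  show c2: "cr (aff2 (P j)) (aff2 (P (j+1))) (aff2 (P (j+int k+1))) > 0"
    using h(2) a0 by (simp add: positive3_def orient_eq)
  have i: "aff2 (P (j + int k)) \<in> interior (convex hull {aff2 (P j), aff2 (P (j+1)), aff2 (P (j + int k + 1))})"
    using h(3) by (simp add: in_tri_int_def)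
  note z = int_pos3[OF c2 i]
  show "cr (aff2 (P j)) (aff2 (P (j+1))) (aff2 (P (j+int k))) > 0"
    "cr (aff2 (P (j+1))) (aff2 (P (j+int k+1))) (aff2 (P (j+int k))) > 0"
    "cr (aff2 (P (j+int k+1))) (aff2 (P j)) (aff2 (P (j+int k))) > 0" using z by auto
qed

lemma beta_facts:
  assumes R: "N_rep_beta k N P" and j: "j \<ge> N"
  shows "cr (aff2 (P j)) (aff2 (P (j+1))) (aff2 (P (j+2))) > 0"
    "cr (aff2 (P j)) (aff2 (P (j+1))) (aff2 (P (j+int k))) > 0"
    "cr (aff2 (P j)) (aff2 (P (j+1))) (aff2 (P (j+int k+1))) > 0"
    "cr (aff2 (P (j+1))) (aff2 (P (j+int k))) (aff2 (P (j+int k+1))) > 0"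
    "cr (aff2 (P (j+int k))) (aff2 (P j)) (aff2 (P (j+int k+1))) > 0"
proof -
  have aff: "\<And>m. m \<ge> N \<Longrightarrow> in_affine (P m)" using R by (simp add: N_rep_beta_def)
  have a0: "in_affine (P j)" "in_affine (P (j+1))" "in_affine (P (j+2))"
     "in_affine (P (j+int k))" "in_affine (P (j+int k+1))" using aff j by auto
  have h: "positive3 (P j) (P (j+1)) (P (j+2))" "positive3 (P j) (P (j+1)) (P (j + int k))"
    "in_tri_int (P (j + int k + 1)) (P j) (P (j+1)) (P (j + int k))"
    using R j by (simp_all add: N_rep_beta_def)
  show c1: "cr (aff2 (P j)) (aff2 (P (j+1))) (aff2 (P (j+2))) > 0"
    using h(1) a0 by (simp add: positive3_def orient_eq)
  show c2: "cr (aff2 (P j)) (aff2 (P (j+1))) (aff2 (P (j+int k))) > 0"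
    using h(2) a0 by (simp add: positive3_def orient_eq)
  have i: "aff2 (P (j + int k + 1)) \<in> interior (convex hull {aff2 (P j), aff2 (P (j+1)), aff2 (P (j + int k))})"
    using h(3) by (simp add: in_tri_int_def)
  note z = int_pos3[OF c2 i]
  show "cr (aff2 (P j)) (aff2 (P (j+1))) (aff2 (P (j+int k+1))) > 0"
    "cr (aff2 (P (j+1))) (aff2 (P (j+int k))) (aff2 (P (j+int k+1))) > 0"
    "cr (aff2 (P (j+int k))) (aff2 (P j)) (aff2 (P (j+int k+1))) > 0" using z by auto
qed

lemma alpha_main:
  assumes R: "N_rep_alpha k N P" and i: "i > N"
  shows "positive3 (P i) (P (i + int k)) (P (i + 2 * int k))"
proof -
  define A where "A m = aff2 (P m)" for m
  have aff: "\<And>m. m \<ge> N \<Longrightarrow> in_affine (P m)" using R by (simp add: N_rep_alpha_def)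
  have f1: "cr (A (i+int k-1)) (A (i+int k)) (A (i+2*int k)) > 0"
    using alpha_facts(2)[OF R, of "i+int k-1"] i unfolding A_def by (simp add: algebra_simps)
  have f2: "cr (A (i+int k)) (A (i+int k+1)) (A (i+2*int k)) > 0"
    using alpha_facts(3)[OF R, of "i+int k"] i unfolding A_def by (simp add: algebra_simps)
  have f3: "cr (A (i+int k-1)) (A (i+int k)) (A (i+int k+1)) > 0"
    using alpha_facts(1)[OF R, of "i+int k-1"] i unfolding A_def by (simp add: algebra_simps)
  have f4: "cr (A i) (A (i+int k)) (A (i+int k-1)) > 0"
    using alpha_facts(4)[OF R, of "i-1"] i unfolding A_def by (simp add: algebra_simps)
  have f5: "cr (A (i+int k+1)) (A i) (A (i+int k)) > 0"
    using alpha_facts(5)[OF R, of "i"] i unfolding A_def by (simp add: algebra_simps)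
  let ?V = "A (i+int k)" and ?M = "A (i+int k-1)" and ?Q = "A (i+int k+1)" and ?W = "A i" and ?D = "A (i+2*int k)"
  have g1: "cr ?V ?D ?M > 0" using f1 cr_cyc[of ?M ?V ?D] by simp
  have g3: "cr ?V ?Q ?M > 0" using f3 cr_cyc[of ?M ?V ?Q] by simp
  have g4: "cr ?V ?M ?W > 0" using f4 cr_cyc[of ?W ?V ?M] by simp
  have g5: "cr ?V ?Q ?W > 0" using f5 cr_cyc[of ?Q ?W ?V] cr_cyc[of ?W ?V ?Q] by simp
  have "cr ?V ?D ?W * cr ?V ?Q ?M > 0"
    using pluecker[of ?V ?D ?W ?Q ?M] g1 f2 g4 g5 by (simp add: add_pos_pos)
  then have "cr ?V ?D ?W > 0" using g3 by (simp add: zero_less_mult_iff)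
  then have "cr ?W ?V ?D > 0" using cr_cyc[of ?W ?V ?D] cr_cyc[of ?V ?D ?W] by simp
  moreover have "in_affine (P i)" "in_affine (P (i+int k))" "in_affine (P (i+2*int k))" using aff i by auto
  ultimately show ?thesis by (simp add: positive3_def orient_eq A_def)
qed

lemma beta_main:
  assumes R: "N_rep_beta k N P" and i: "i > N"
  shows "positive3 (P (i + 2 * int k)) (P (i + int k)) (P i)"
proof -
  define A where "A m = aff2 (P m)" for m
  have aff: "\<And>m. m \<ge> N \<Longrightarrow> in_affine (P m)" using R by (simp add: N_rep_beta_def)
  have f1: "cr (A (i+int k-1)) (A (i+int k)) (A (i+2*int k)) > 0"
    using beta_facts(3)[OF R, of "i+int k-1"] i unfolding A_def by (simp add: algebra_simps)
  have f2: "cr (A (i+int k)) (A (i+int k+1)) (A (i+2*int k)) > 0"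
    using beta_facts(2)[OF R, of "i+int k"] i unfolding A_def by (simp add: algebra_simps)
  have f3: "cr (A (i+int k-1)) (A (i+int k)) (A (i+int k+1)) > 0"
    using beta_facts(1)[OF R, of "i+int k-1"] i unfolding A_def by (simp add: algebra_simps)
  have f4: "cr (A i) (A (i+int k-1)) (A (i+int k)) > 0"
    using beta_facts(4)[OF R, of "i-1"] i unfolding A_def by (simp add: algebra_simps)
  have f5: "cr (A (i+int k)) (A i) (A (i+int k+1)) > 0"
    using beta_facts(5)[OF R, of "i"] i unfolding A_def by (simp add: algebra_simps)
  let ?V = "A (i+int k)" and ?M = "A (i+int k-1)" and ?Q = "A (i+int k+1)" and ?W = "A i" and ?D = "A (i+2*int k)"
  have g1: "cr ?V ?D ?M > 0" using f1 cr_cyc[of ?M ?V ?D] by simp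
  have g3: "cr ?V ?Q ?M > 0" using f3 cr_cyc[of ?M ?V ?Q] by simp
  have g4: "cr ?V ?M ?W < 0" using f4 cr_cyc[of ?W ?M ?V] cr_cyc[of ?M ?V ?W] cr_swap[of ?V ?M ?W] by simp
  have g5: "cr ?V ?Q ?W < 0" using f5 cr_swap[of ?V ?Q ?W] by simp
  have "cr ?V ?D ?W * cr ?V ?Q ?M < 0"
    using pluecker[of ?V ?D ?W ?Q ?M] g1 f2 g4 g5
    by (smt (verit) mult_pos_neg)
  then have "cr ?V ?D ?W < 0" using g3 by (simp add: mult_less_0_iff)
  then have "cr ?D ?V ?W > 0" using cr_cyc[of ?D ?V ?W] cr_swap[of ?V ?W ?D] by simp
  moreover have "in_affine (P i)" "in_affine (P (i+int k))" "in_affine (P (i+2*int k))" using aff i by auto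
  ultimately show ?thesis by (simp add: positive3_def orient_eq A_def)
qed

theorem mainTheorem4:
  fixes k n :: nat and N :: int and P :: "int \<Rightarrow> real^3"
  assumes "k \<ge> 3" and "n \<ge> 2"
  shows "(spiral_alpha n k P \<and> N_rep_alpha k N P \<longrightarrow>
            (\<forall>i>N. positive3 (P i) (P (i + int k)) (P (i + 2 * int k)))) \<and>
         (spiral_beta n k P \<and> N_rep_beta k N P \<longrightarrow>
            (\<forall>i>N. positive3 (P (i + 2 * int k)) (P (i + int k)) (P i)))"
  using alpha_main beta_main by blast

end
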